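(* Let $Z_1,\dots,Z_n$ be i.i.d. real random variables with $\mathbb{E}Z_1=\mu_Z$, $\mathrm{Var}(Z_1)=\sigma_Z^2>0$ and $|Z_1-\mu_Z|\leq\Delta_Z$ almost surely. Let $\overline{Z}_n:=\frac1n\sum_{i=1}^nZ_i$, \[V_n^2:=\frac1n\sum_{i=1}^n(Z_i-\mu_Z)^2,\qquad\Sigma_n^2:=\frac1n\sum_{i=1}^n(Z_i-\overline{Z}_n)^2,\] with $V_n,\Sigma_n\geq0$. Then for all $z>0$, \[\Pr\left(|V_n-\sigma_Z|>\frac{z\Delta_Z}{\sqrt n}+\frac{z^2\Delta_Z^2}{12n\sigma_Z}\right)\leq2\exp\left(-\frac{z^2}2\right)\] and \[\Pr\left(|\Sigma_n-\sigma_Z|>\frac{2z\Delta_Z}{\sqrt n}+\frac{2z^2\Delta_Z^2}{12n\sigma_Z}\right)\leq4\exp\left(-\frac{z^2}2\right).\] *)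

theory Defs
  imports "HOL-Probability.Probability"
begin

definition sample_mean :: "(nat \<Rightarrow> 'a \<Rightarrow> real) \<Rightarrow> nat \<Rightarrow> 'a \<Rightarrow> real" where
  "sample_mean Z n x = (1 / real n) * (\<Sum>i=1..n. Z i x)"

definition V_stat :: "(nat \<Rightarrow> 'a \<Rightarrow> real) \<Rightarrow> real \<Rightarrow> nat \<Rightarrow> 'a \<Rightarrow> real" where
  "V_stat Z mu n x = sqrt ((1 / real n) * (\<Sum>i=1..n. (Z i x - mu)\<^sup>2))"

definition Sigma_stat :: "(nat \<Rightarrow> 'a \<Rightarrow> real) \<Rightarrow> nat \<Rightarrow> 'a \<Rightarrow> real" where
  "Sigma_stat Z n x = sqrt ((1 / real n) * (\<Sum>i=1..n. (Z i x - sample_mean Z n x)\<^sup>2))"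

end

theory Submission
  imports Defs
begin


lemma exp_neg_le_quad:
  fixes x :: real assumes "x \<ge> 0"
  shows "exp (- x) \<le> 1 - x + x\<^sup>2 / 2"
proof -
  define g where "g = (\<lambda>t::real. 1 - t + t\<^sup>2 / 2 - exp (- t))"
  have d: "\<And>t. (g has_real_derivative (-1 + t + exp (- t))) (at t)"
    unfolding g_def by (auto intro!: derivative_eq_intros simp: power2_eq_square)
  have "g 0 \<le> g x"
  proof (rule DERIV_nonneg_imp_nondecreasing[OF assms])
    fix t assume "0 \<le> t" "t \<le> x"
    have "exp (-t) \<ge> 1 + (-t)" by (rule exp_ge_add_one_self)
    then show "\<exists>y. (g has_real_derivative y) (at t) \<and> 0 \<le> y" using d[of t] by (intro exI[of _ "-1 + t + exp (-t)"]) auto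
  qed
  then show ?thesis by (simp add: g_def)
qed

lemma exp_convex_bound:
  fixes w B s :: real assumes "0 \<le> w" "w \<le> B" "B > 0" "s \<ge> 0"
  shows "exp (s * w) \<le> 1 + w / B * (exp (s * B) - 1)"
proof -
  have "exp (s * ((1 - w/B) *\<^sub>R 0 + (w/B) *\<^sub>R B)) \<le> (1 - w/B) * exp (s * 0) + (w/B) * exp (s * B)"
    by (rule convex_onD[OF convex_on_exp[OF assms(4)]]) (use assms in auto)
  then show ?thesis using assms by (simp add: algebra_simps)
qed



lemma (in prob_space) mgf_sum_bound:
  assumes fin: "finite I" and ind: "indep_vars (\<lambda>_. borel) W I"
    and c: "c \<ge> 0"
    and bnd: "\<And>i. i \<in> I \<Longrightarrow> (\<integral>\<^sup>+x. ennreal (exp (s * W i x)) \<partial>M) \<le> ennreal c"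
  shows "(\<integral>\<^sup>+x. ennreal (exp (s * (\<Sum>i\<in>I. W i x))) \<partial>M) \<le> ennreal (c ^ card I)"
proof -
  have "(\<integral>\<^sup>+x. ennreal (exp (s * (\<Sum>i\<in>I. W i x))) \<partial>M) = (\<integral>\<^sup>+x. (\<Prod>i\<in>I. ennreal (exp (s * W i x))) \<partial>M)"
    by (intro nn_integral_cong) (simp add: sum_distrib_left exp_sum fin prod_ennreal)
  also have "\<dots> = (\<Prod>i\<in>I. \<integral>\<^sup>+x. ennreal (exp (s * W i x)) \<partial>M)"
    by (intro indep_vars_nn_integral fin indep_vars_compose2[OF ind]) auto
  also have "\<dots> \<le> (\<Prod>i\<in>I. ennreal c)"
    by (intro prod_mono_ennreal bnd)
  also have "\<dots> = ennreal (c ^ card I)"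
    using c by (simp add: prod_ennreal ennreal_power)
  finally show ?thesis .
qed

lemma (in prob_space) upper_tail:
  assumes fin: "finite I" and ind: "indep_vars (\<lambda>_. borel) W I"
    and meas: "\<And>i. i \<in> I \<Longrightarrow> W i \<in> borel_measurable M"
    and rng: "\<And>i. i \<in> I \<Longrightarrow> AE x in M. W i x \<in> {0..B}"
    and ex: "\<And>i. i \<in> I \<Longrightarrow> expectation (W i) = m"
    and B: "B > 0" and s: "s > 0"
  shows "prob {x\<in>space M. (\<Sum>i\<in>I. W i x) \<ge> a}
           \<le> exp (- s * a) * exp (m / B * (exp (s * B) - 1)) ^ card I"
proof -
  have per: "(\<integral>\<^sup>+x. ennreal (exp (s * W i x)) \<partial>M) \<le> ennreal (exp (m / B * (exp (s * B) - 1)))"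
    if i: "i \<in> I" for i
  proof -
    interpret interval_bounded_random_variable M "W i" 0 B
      by unfold_locales (use meas[OF i] rng[OF i] in auto)
    have "(\<integral>\<^sup>+x. ennreal (exp (s * W i x)) \<partial>M) \<le> (\<integral>\<^sup>+x. ennreal (1 + W i x / B * (exp (s * B) - 1)) \<partial>M)"
      by (intro nn_integral_mono_AE eventually_mono[OF rng[OF i]] ennreal_leI exp_convex_bound)
         (use B s in auto)
    also have "\<dots> = ennreal (expectation (\<lambda>x. 1 + W i x / B * (exp (s * B) - 1)))"
    proof (intro nn_integral_eq_integral eventually_mono[OF rng[OF i]])
      fix x assume "W i x \<in> {0..B}"
      then show "0 \<le> 1 + W i x / B * (exp (s * B) - 1)" using B s by auto
    qed (auto intro!: integrable_diff integrable_add integrable_mult_right integrable_mult_left integrable_divide integrable)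
    also have "expectation (\<lambda>x. 1 + W i x / B * (exp (s * B) - 1)) = 1 + m / B * (exp (s * B) - 1)"
      using ex[OF i] by (subst Bochner_Integration.integral_add) (auto simp: prob_space intro!: integrable_diff integrable_add integrable_mult_right integrable_mult_left integrable_divide integrable)
    also have "\<dots> \<le> exp (m / B * (exp (s * B) - 1))"
      using exp_ge_add_one_self by (metis add.commute)
    finally show ?thesis by (simp add: ennreal_leI)
  qed
  have mW: "(\<lambda>x. \<Sum>i\<in>I. W i x) \<in> borel_measurable M"
    using meas by measurable
  have "ennreal (prob {x\<in>space M. (\<Sum>i\<in>I. W i x) \<ge> a}) = emeasure M {x\<in>space M. (\<Sum>i\<in>I. W i x) \<ge> a}"
    by (simp add: emeasure_eq_measure)
  also have "\<dots> \<le> ennreal (exp (-s*a)) * (\<integral>\<^sup>+x\<in>space M. exp (s * (\<Sum>i\<in>I. W i x)) \<partial>M)"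
    by (intro Chernoff_ineq_nn_integral_ge s) (use mW in auto)
  also have "(\<integral>\<^sup>+x\<in>space M. exp (s * (\<Sum>i\<in>I. W i x)) \<partial>M) = (\<integral>\<^sup>+x. exp (s * (\<Sum>i\<in>I. W i x)) \<partial>M)"
    by (intro nn_integral_cong) simp
  also have "ennreal (exp (-s*a)) * \<dots> \<le> ennreal (exp (-s*a)) * ennreal (exp (m / B * (exp (s * B) - 1)) ^ card I)"
    by (intro mult_left_mono mgf_sum_bound fin ind per) auto
  also have "\<dots> = ennreal (exp (-s*a) * exp (m / B * (exp (s * B) - 1)) ^ card I)"
    by (simp add: ennreal_mult)
  finally show ?thesis
    by (subst (asm) ennreal_le_iff) auto
qed

lemma (in prob_space) lower_tail:
  assumes fin: "finite I" and ind: "indep_vars (\<lambda>_. borel) W I"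
    and meas: "\<And>i. i \<in> I \<Longrightarrow> W i \<in> borel_measurable M"
    and rng: "\<And>i. i \<in> I \<Longrightarrow> AE x in M. W i x \<in> {0..B}"
    and ex: "\<And>i. i \<in> I \<Longrightarrow> expectation (W i) = m"
    and B: "B > 0" and s: "s > 0"
  shows "prob {x\<in>space M. (\<Sum>i\<in>I. W i x) \<le> a}
           \<le> exp (s * a) * exp (- s * m + s\<^sup>2 * B * m / 2) ^ card I"
proof -
  have per: "(\<integral>\<^sup>+x. ennreal (exp ((-s) * W i x)) \<partial>M) \<le> ennreal (exp (- s * m + s\<^sup>2 * B * m / 2))"
    if i: "i \<in> I" for i
  proof -
    interpret interval_bounded_random_variable M "W i" 0 B
      by unfold_locales (use meas[OF i] rng[OF i] in auto)
    have pt: "exp ((-s) * w) \<le> 1 - s * w + s\<^sup>2 * B * w / 2" if "0 \<le> w" "w \<le> B" for w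
    proof -
      have "exp ((-s) * w) = exp (- (s * w))" by simp
      also have "\<dots> \<le> 1 - s * w + (s * w)\<^sup>2 / 2"
        by (rule exp_neg_le_quad) (use s that in auto)
      also have "(s * w)\<^sup>2 \<le> s\<^sup>2 * B * w"
      proof -
        have "w * (s * w) \<le> B * (s * w)" by (rule mult_right_mono) (use that s in auto)
        then have "s * (w * (s * w)) \<le> s * (B * (s * w))" by (rule mult_left_mono) (use s in auto)
        then show ?thesis by (simp add: power2_eq_square algebra_simps)
      qed
      finally show ?thesis by simp
    qed
    have "(\<integral>\<^sup>+x. ennreal (exp ((-s) * W i x)) \<partial>M) \<le> (\<integral>\<^sup>+x. ennreal (1 - s * W i x + s\<^sup>2 * B * W i x / 2) \<partial>M)"
      by (intro nn_integral_mono_AE eventually_mono[OF rng[OF i]] ennreal_leI pt) auto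
    also have "\<dots> = ennreal (expectation (\<lambda>x. 1 - s * W i x + s\<^sup>2 * B * W i x / 2))"
    proof (intro nn_integral_eq_integral eventually_mono[OF rng[OF i]])
      fix x assume "W i x \<in> {0..B}"
      then have "0 < exp ((-s) * W i x)" "exp ((-s) * W i x) \<le> 1 - s * W i x + s\<^sup>2 * B * W i x / 2"
        using pt by auto
      then show "0 \<le> 1 - s * W i x + s\<^sup>2 * B * W i x / 2" by linarith
    qed (auto intro!: integrable_diff integrable_add integrable_mult_right integrable_mult_left integrable_divide integrable)
    also have "expectation (\<lambda>x. 1 - s * W i x + s\<^sup>2 * B * W i x / 2) = 1 - s * m + s\<^sup>2 * B * m / 2"
      using ex[OF i] by (subst Bochner_Integration.integral_add Bochner_Integration.integral_diff, auto simp: prob_space intro!: integrable_diff integrable_add integrable_mult_right integrable_mult_left integrable_divide integrable)+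
    also have "\<dots> \<le> exp (- s * m + s\<^sup>2 * B * m / 2)"
      using exp_ge_add_one_self[of "- s * m + s\<^sup>2 * B * m / 2"] by (simp add: algebra_simps)
    finally show ?thesis by (simp add: ennreal_leI)
  qed
  have mW: "(\<lambda>x. \<Sum>i\<in>I. W i x) \<in> borel_measurable M"
    using meas by measurable
  have "ennreal (prob {x\<in>space M. (\<Sum>i\<in>I. W i x) \<le> a}) = emeasure M {x\<in>space M. (\<Sum>i\<in>I. W i x) \<le> a}"
    by (simp add: emeasure_eq_measure)
  also have "\<dots> \<le> ennreal (exp (s*a)) * (\<integral>\<^sup>+x\<in>space M. exp (-s * (\<Sum>i\<in>I. W i x)) \<partial>M)"
    by (intro Chernoff_ineq_nn_integral_le s) (use mW in auto)
  also have "(\<integral>\<^sup>+x\<in>space M. exp (-s * (\<Sum>i\<in>I. W i x)) \<partial>M) = (\<integral>\<^sup>+x. exp ((-s) * (\<Sum>i\<in>I. W i x)) \<partial>M)"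
    by (intro nn_integral_cong) simp
  also have "ennreal (exp (s*a)) * \<dots> \<le> ennreal (exp (s*a)) * ennreal (exp (- s * m + s\<^sup>2 * B * m / 2) ^ card I)"
    by (intro mult_left_mono mgf_sum_bound fin ind per) auto
  also have "\<dots> = ennreal (exp (s*a) * exp (- s * m + s\<^sup>2 * B * m / 2) ^ card I)"
    by (simp add: ennreal_mult)
  finally show ?thesis
    by (subst (asm) ennreal_le_iff) auto
qed



lemma var_identity:
  assumes "n \<ge> 1"
  shows "(1 / real n) * (\<Sum>i=1..n. (Z i x - sample_mean Z n x)\<^sup>2)
       = (1 / real n) * (\<Sum>i=1..n. (Z i x - mu)\<^sup>2) - (sample_mean Z n x - mu)\<^sup>2"
proof -
  define d where "d = sample_mean Z n x - mu"
  define Q where "Q = (\<Sum>i=1..n. (Z i x - mu)\<^sup>2)"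
  have n: "real n > 0" using assms by simp
  have sZ: "(\<Sum>i=1..n. Z i x) = real n * sample_mean Z n x"
    using n unfolding sample_mean_def by simp
  have sy: "(\<Sum>i=1..n. (Z i x - mu)) = real n * d"
  proof -
    have "(\<Sum>i=1..n. (Z i x - mu)) = (\<Sum>i=1..n. Z i x) - real n * mu"
      by (simp add: sum_subtractf)
    also have "\<dots> = real n * d" unfolding sZ d_def by (simp add: right_diff_distrib)
    finally show ?thesis .
  qed
  have "(\<Sum>i=1..n. (Z i x - sample_mean Z n x)\<^sup>2) = (\<Sum>i=1..n. ((Z i x - mu) - d)\<^sup>2)"
    by (simp add: d_def)
  also have "\<dots> = Q - 2 * d * (\<Sum>i=1..n. (Z i x - mu)) + real n * d\<^sup>2"
  proof -
    have "(\<Sum>i=1..n. ((Z i x - mu) - d)\<^sup>2) = (\<Sum>i=1..n. (Z i x - mu)\<^sup>2 - 2 * d * (Z i x - mu) + d\<^sup>2)"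
      by (intro sum.cong refl) (simp add: power2_diff)
    also have "\<dots> = (\<Sum>i=1..n. (Z i x - mu)\<^sup>2) - (\<Sum>i=1..n. 2 * d * (Z i x - mu)) + (\<Sum>i=1..n. d\<^sup>2)"
      by (simp only: sum.distrib sum_subtractf)
    also have "\<dots> = Q - 2 * d * (\<Sum>i=1..n. (Z i x - mu)) + real n * d\<^sup>2"
      unfolding Q_def by (simp only: sum_distrib_left[symmetric] sum_constant card_atLeastAtMost) simp
    finally show ?thesis .
  qed
  also have "\<dots> = Q - real n * d\<^sup>2"
    unfolding sy by (simp add: power2_eq_square)
  finally have e: "(\<Sum>i=1..n. (Z i x - sample_mean Z n x)\<^sup>2) = Q - real n * d\<^sup>2" .
  show ?thesis unfolding e Q_def[symmetric] d_def[symmetric] using n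
    by (simp add: right_diff_distrib)
qed

lemma sqrt_diff_bound:
  fixes A c :: real
  assumes "A - c\<^sup>2 \<ge> 0"
  shows "\<bar>sqrt (A - c\<^sup>2) - s\<bar> \<le> \<bar>sqrt A - s\<bar> + \<bar>c\<bar>"
proof -
  have "sqrt (A - c\<^sup>2) \<le> sqrt A" by (rule real_sqrt_le_mono) simp
  moreover have "sqrt A \<le> sqrt (A - c\<^sup>2) + \<bar>c\<bar>"
  proof -
    have "(sqrt (A - c\<^sup>2))\<^sup>2 = A - c\<^sup>2" using assms by simp
    then have "A \<le> (sqrt (A - c\<^sup>2) + \<bar>c\<bar>)\<^sup>2"
      unfolding power2_sum by (simp add: )
    then have "sqrt A \<le> sqrt ((sqrt (A - c\<^sup>2) + \<bar>c\<bar>)\<^sup>2)" by (rule real_sqrt_le_mono)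
    also have "\<dots> = sqrt (A - c\<^sup>2) + \<bar>c\<bar>"
    proof -
      have "0 \<le> sqrt (A - c\<^sup>2)" using assms by simp
      then have "0 \<le> sqrt (A - c\<^sup>2) + \<bar>c\<bar>" by linarith
      then show ?thesis by (subst real_sqrt_abs) (rule abs_of_nonneg)
    qed
    finally show ?thesis .
  qed
  ultimately show ?thesis by linarith
qed



theorem theoremA3:
  fixes M :: "'a measure" and Z :: "nat \<Rightarrow> 'a \<Rightarrow> real"
    and n :: nat and mu sigma Delta z :: real
  assumes "prob_space M"
    and "n \<ge> 1"
    and "\<And>i. i \<in> {1..n} \<Longrightarrow> Z i \<in> borel_measurable M"
    and "prob_space.indep_vars M (\<lambda>_. borel) Z {1..n}"
    and "\<And>i. i \<in> {1..n} \<Longrightarrow> distr M borel (Z i) = distr M borel (Z 1)"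
    and "(LINT x|M. Z 1 x) = mu"
    and "(LINT x|M. (Z 1 x - mu)\<^sup>2) = sigma\<^sup>2"
    and "sigma > 0"
    and "AE x in M. \<bar>Z 1 x - mu\<bar> \<le> Delta"
    and "z > 0"
  shows "measure M {x \<in> space M. \<bar>V_stat Z mu n x - sigma\<bar>
             > z * Delta / sqrt (real n) + z\<^sup>2 * Delta\<^sup>2 / (12 * real n * sigma)}
           \<le> 2 * exp (- z\<^sup>2 / 2)
       \<and> measure M {x \<in> space M. \<bar>Sigma_stat Z n x - sigma\<bar>
             > 2 * z * Delta / sqrt (real n) + 2 * z\<^sup>2 * Delta\<^sup>2 / (12 * real n * sigma)}
           \<le> 4 * exp (- z\<^sup>2 / 2)"
proof -
  interpret prob_space M by fact
  note meas = assms(3) and ind = assms(4) and dist = assms(5)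
  define I where "I = {1..n::nat}"
  have fin: "finite I" and cardI: "card I = n" and oneI: "1 \<in> I"
    using assms(2) by (auto simp: I_def)
  have n: "real n > 0" using assms(2) by simp
  have sig: "sigma > 0" by fact
  have z: "z > 0" by fact
  define W where "W = (\<lambda>i x. (Z i x - mu)\<^sup>2)"
  have measW: "W i \<in> borel_measurable M" if "i \<in> I" for i
    using meas[of i] that unfolding W_def I_def by measurable
  have indW: "indep_vars (\<lambda>_. borel) W I"
    unfolding W_def I_def by (rule indep_vars_compose2[OF ind, where Y = "\<lambda>i y. (y - mu)\<^sup>2"]) auto
  have int_tr: "expectation (\<lambda>x. f (Z i x)) = expectation (\<lambda>x. f (Z 1 x))"
    if i: "i \<in> I" and f: "f \<in> borel_measurable borel" for i and f :: "real \<Rightarrow> real"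
  proof -
    have mi: "Z i \<in> borel_measurable M" "Z 1 \<in> borel_measurable M" using meas i oneI by (auto simp: I_def)
    have di: "distr M borel (Z i) = distr M borel (Z 1)" by (rule dist) (use i in \<open>simp add: I_def\<close>)
    have "expectation (\<lambda>x. f (Z i x)) = integral\<^sup>L (distr M borel (Z i)) f"
      by (rule integral_distr[symmetric]) (use mi f in auto)
    also have "\<dots> = integral\<^sup>L (distr M borel (Z 1)) f" by (simp only: di)
    also have "\<dots> = expectation (\<lambda>x. f (Z 1 x))"
      by (rule integral_distr) (use mi f in auto)
    finally show ?thesis .
  qed
  have AE_tr: "AE x in M. \<bar>Z i x - mu\<bar> \<le> Delta" if i: "i \<in> I" for i
  proof -
    have m1: "Z 1 \<in> borel_measurable M" "Z i \<in> borel_measurable M" using meas oneI i by (auto simp: I_def)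
    have "AE x in distr M borel (Z 1). \<bar>x - mu\<bar> \<le> Delta"
      using assms(9) m1 by (subst AE_distr_iff) auto
    moreover have di: "distr M borel (Z i) = distr M borel (Z 1)" by (rule dist) (use i in \<open>simp add: I_def\<close>)
    ultimately have "AE x in distr M borel (Z i). \<bar>x - mu\<bar> \<le> Delta"
      by (simp only: di)
    then show ?thesis using m1 by (subst (asm) AE_distr_iff) auto
  qed
  have D0: "Delta \<ge> 0"
  proof -
    have "AE x in M. 0 \<le> Delta" by (rule eventually_mono[OF assms(9)]) auto
    then show ?thesis by simp
  qed
  have rngW: "AE x in M. W i x \<in> {0..Delta\<^sup>2}" if i: "i \<in> I" for i
  proof (rule eventually_mono[OF AE_tr[OF i]])
    fix x assume "\<bar>Z i x - mu\<bar> \<le> Delta"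
    then have "\<bar>Z i x - mu\<bar>\<^sup>2 \<le> Delta\<^sup>2" by (intro power_mono) auto
    then show "W i x \<in> {0..Delta\<^sup>2}" by (simp add: W_def)
  qed
  have exW: "expectation (W i) = sigma\<^sup>2" if i: "i \<in> I" for i
    using int_tr[OF i, of "\<lambda>y. (y - mu)\<^sup>2"] assms(7) by (simp add: W_def)
  have exZ: "expectation (Z 1) = mu" using assms(6) by simp
  have DD: "sigma\<^sup>2 \<le> Delta\<^sup>2"
  proof -
    interpret interval_bounded_random_variable M "W 1" 0 "Delta\<^sup>2"
      by unfold_locales (use measW[OF oneI] rngW[OF oneI] in auto)
    have "expectation (W 1) \<le> expectation (\<lambda>_. Delta\<^sup>2)"
      by (intro integral_mono_AE integrable eventually_mono[OF rngW[OF oneI]]) auto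
    then show ?thesis using exW[OF oneI] by (simp add: prob_space)
  qed
  have D: "Delta > 0"
  proof -
    have "0 < sigma\<^sup>2" using sig by simp
    with DD have "Delta \<noteq> 0" by auto
    with D0 show ?thesis by simp
  qed
  define B where "B = Delta\<^sup>2"
  have B: "B > 0" using D by (simp add: B_def)
  define u where "u = z * Delta / sqrt (real n)"
  have u: "u > 0" using z D n by (simp add: u_def)
  have nu2: "real n * u\<^sup>2 = z\<^sup>2 * B"
    using n by (simp add: u_def B_def power_divide power_mult_distrib)
  define thr where "thr = z * Delta / sqrt (real n) + z\<^sup>2 * Delta\<^sup>2 / (12 * real n * sigma)"
  have thr: "u \<le> thr" using n sig by (simp add: thr_def u_def)
  define S where "S = (\<lambda>x. \<Sum>i\<in>I. W i x)"
  have measS: "S \<in> borel_measurable M" unfolding S_def using measW by measurable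
  have V_eq: "V_stat Z mu n x = sqrt (S x / real n)" for x
    by (simp add: V_stat_def S_def W_def I_def)
  define U where "U = {x\<in>space M. S x \<ge> real n * (sigma + u)\<^sup>2}"
  define L where "L = {x\<in>space M. S x \<le> real n * (sigma\<^sup>2 - sigma * u)}"
  have U_sets: "U \<in> sets M" unfolding U_def using measS by measurable
  have L_sets: "L \<in> sets M" unfolding L_def using measS by measurable
  have PU: "prob U \<le> exp (- z\<^sup>2 / 2)"
  proof -
    define lam where "lam = ln (1 + u / sigma)"
    define s where "s = 2 * lam / B"
    have lam: "lam > 0" unfolding lam_def by (intro ln_gt_zero) (use u sig in simp)
    have s: "s > 0" using lam B by (simp add: s_def)
    have "prob U \<le> exp (- s * (real n * (sigma + u)\<^sup>2)) * exp (sigma\<^sup>2 / B * (exp (s * B) - 1)) ^ card I"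
      unfolding U_def S_def
      by (rule upper_tail[OF fin indW measW rngW[unfolded B_def[symmetric]] exW B s])
    also have "\<dots> = exp (- s * (real n * (sigma + u)\<^sup>2) + real n * (sigma\<^sup>2 / B * (exp (s * B) - 1)))"
      by (simp add: cardI exp_add[symmetric] exp_of_nat_mult[symmetric] algebra_simps)
    also have "\<dots> \<le> exp (- z\<^sup>2 / 2)"
    proof -
      have sB: "s * B = lam + lam" using B by (simp add: s_def)
      have el: "exp lam = 1 + u / sigma" unfolding lam_def using u sig by (intro exp_ln) (simp add: add_pos_pos)
      have e1: "exp (s * B) - 1 = (1 + u / sigma)\<^sup>2 - 1" unfolding sB exp_add el by (simp add: power2_eq_square)
      have e2: "sigma\<^sup>2 / B * ((1 + u / sigma)\<^sup>2 - 1) = (2 * sigma * u + u\<^sup>2) / B"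
        using sig B by (simp add: field_simps power2_eq_square)
      have l0: "(u / sigma) / (1 + u / sigma) \<le> lam"
        unfolding lam_def using ln_add1_ge[of "u / sigma"] u sig by (simp add: add.commute)
      have l1: "u \<le> lam * (sigma + u)"
      proof -
        have "(u / sigma) / (1 + u / sigma) = u / (sigma + u)" using sig u by (simp add: field_simps)
        with l0 have "u / (sigma + u) \<le> lam" by (simp only:)
        then show ?thesis using sig u by (simp add: field_simps)
      qed
      have l2: "2 * u * (sigma + u) \<le> 2 * lam * (sigma + u)\<^sup>2"
        using mult_right_mono[OF l1, of "2 * (sigma + u)"] sig u by (simp add: power2_eq_square algebra_simps)
      have "- s * (real n * (sigma + u)\<^sup>2) + real n * (sigma\<^sup>2 / B * (exp (s * B) - 1))
            = real n / B * (- 2 * lam * (sigma + u)\<^sup>2 + (2 * sigma * u + u\<^sup>2))"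
        unfolding e1 unfolding e2 unfolding s_def using B by (simp add: field_simps)
      also have "\<dots> \<le> real n / B * (- 2 * u * (sigma + u) + (2 * sigma * u + u\<^sup>2))"
        using l2 n B by (intro mult_left_mono) auto
      also have "\<dots> = - (real n * u\<^sup>2) / B" by (simp add: field_simps power2_eq_square)
      also have "\<dots> = - z\<^sup>2" unfolding nu2 using B by simp
      also have "\<dots> \<le> - z\<^sup>2 / 2" by simp
      finally show ?thesis by simp
    qed
    finally show ?thesis .
  qed
  have PL: "prob L \<le> exp (- z\<^sup>2 / 2)"
  proof -
    define s where "s = u / (B * sigma)"
    have s: "s > 0" using u B sig by (simp add: s_def)
    have "prob L \<le> exp (s * (real n * (sigma\<^sup>2 - sigma * u))) * exp (- s * sigma\<^sup>2 + s\<^sup>2 * B * sigma\<^sup>2 / 2) ^ card I"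
      unfolding L_def S_def
      by (rule lower_tail[OF fin indW measW rngW[unfolded B_def[symmetric]] exW B s])
    also have "\<dots> = exp (s * (real n * (sigma\<^sup>2 - sigma * u)) + real n * (- s * sigma\<^sup>2 + s\<^sup>2 * B * sigma\<^sup>2 / 2))"
      by (simp add: cardI exp_add[symmetric] exp_of_nat_mult[symmetric] algebra_simps)
    also have "s * (real n * (sigma\<^sup>2 - sigma * u)) + real n * (- s * sigma\<^sup>2 + s\<^sup>2 * B * sigma\<^sup>2 / 2)
             = - (real n * u\<^sup>2) / (2 * B)"
      unfolding s_def using B sig by (simp add: field_simps power2_eq_square)
    also have "\<dots> = - z\<^sup>2 / 2" unfolding nu2 using B by simp
    finally show ?thesis .
  qed
  have S0: "S x \<ge> 0" for x unfolding S_def W_def by (intro sum_nonneg) simp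
  have split: "S x \<ge> real n * (sigma + u)\<^sup>2 \<or> S x \<le> real n * (sigma\<^sup>2 - sigma * u)"
    if "\<bar>V_stat Z mu n x - sigma\<bar> > thr" for x
  proof -
    define v where "v = V_stat Z mu n x"
    have q0: "0 \<le> S x / real n" using divide_nonneg_nonneg[OF S0[of x], of "real n"] n by simp
    have v0: "v \<ge> 0" unfolding v_def V_eq using q0 by simp
    have vsq: "v\<^sup>2 = S x / real n" unfolding v_def V_eq using q0 by simp
    have "v - sigma > u \<or> sigma - v > u" using that thr unfolding v_def by linarith
    then show ?thesis
    proof
      assume "v - sigma > u"
      then have "(sigma + u)\<^sup>2 < v\<^sup>2" using sig u by (intro power_strict_mono) auto
      then have "real n * (sigma + u)\<^sup>2 \<le> real n * (S x / real n)" unfolding vsq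
        by (intro mult_left_mono) (use n in auto)
      then show ?thesis using n by simp
    next
      assume a: "sigma - v > u"
      have "u * sigma \<le> (sigma - v) * (sigma + v)"
        using a v0 sig u by (intro mult_mono) auto
      then have "v\<^sup>2 \<le> sigma\<^sup>2 - sigma * u" by (simp add: power2_eq_square algebra_simps)
      then have "real n * (S x / real n) \<le> real n * (sigma\<^sup>2 - sigma * u)" unfolding vsq
        by (intro mult_left_mono) (use n in auto)
      then show ?thesis using n by simp
    qed
  qed
  have UL_sets: "U \<union> L \<in> sets M" using U_sets L_sets by auto
  have sub1: "{x \<in> space M. \<bar>V_stat Z mu n x - sigma\<bar> > thr} \<subseteq> U \<union> L"
    using split unfolding U_def L_def by auto
  have PUL: "prob (U \<union> L) \<le> 2 * exp (- z\<^sup>2 / 2)"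
    using measure_Un_le[OF U_sets L_sets] PU PL by linarith
  have part1: "prob {x \<in> space M. \<bar>V_stat Z mu n x - sigma\<bar> > thr} \<le> 2 * exp (- z\<^sup>2 / 2)"
    using finite_measure_mono[OF sub1 UL_sets] PUL by linarith
  define H where "H = {x \<in> space M. \<bar>(\<Sum>i\<in>I. Z i x) / real (card I) - mu\<bar> \<ge> u}"
  have PH: "prob H \<le> 2 * exp (- z\<^sup>2 / 2)"
  proof -
    have m1: "Z 1 \<in> borel_measurable M" using meas oneI by (auto simp: I_def)
    interpret Hf: Hoeffding_ineq_iid M I Z "Z 1" "mu - Delta" "mu + Delta" mu
    proof unfold_locales
      show "indep_vars (\<lambda>_. borel) Z I" using ind by (simp add: I_def)
      show "distr M borel (Z i) = distr M borel (Z 1)" if "i \<in> I" for i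
        by (rule dist) (use that in \<open>simp add: I_def\<close>)
      show "AE x in M. Z 1 x \<in> {mu - Delta..mu + Delta}"
        by (rule eventually_mono[OF assms(9)]) auto
      show "mu \<equiv> expectation (Z 1)" using exZ by simp
    qed (use fin m1 in auto)
    have "prob H \<le> 2 * exp (-2 * real (card I) * u\<^sup>2 / ((mu + Delta) - (mu - Delta))\<^sup>2)"
      unfolding H_def by (rule Hf.Hoeffding_ineq_abs_ge') (use u D oneI in auto)
    also have "-2 * real (card I) * u\<^sup>2 / ((mu + Delta) - (mu - Delta))\<^sup>2 = - z\<^sup>2 / 2"
      using nu2 D unfolding cardI B_def by (simp add: field_simps power2_eq_square)
    finally show ?thesis .
  qed
  have H_sets: "H \<in> sets M" unfolding H_def using meas by (auto simp: I_def)
  have sub2: "{x \<in> space M. \<bar>Sigma_stat Z n x - sigma\<bar> > 2 * thr} \<subseteq> (U \<union> L) \<union> H"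
  proof
    fix x assume x: "x \<in> {x \<in> space M. \<bar>Sigma_stat Z n x - sigma\<bar> > 2 * thr}"
    define A where "A = (1 / real n) * (\<Sum>i=1..n. (Z i x - mu)\<^sup>2)"
    define c where "c = sample_mean Z n x - mu"
    have e: "(1 / real n) * (\<Sum>i=1..n. (Z i x - sample_mean Z n x)\<^sup>2) = A - c\<^sup>2"
      unfolding A_def c_def by (rule var_identity[OF assms(2)])
    have nn: "A - c\<^sup>2 \<ge> 0" unfolding e[symmetric] using n by (intro mult_nonneg_nonneg sum_nonneg) auto
    have Sg: "Sigma_stat Z n x = sqrt (A - c\<^sup>2)" unfolding Sigma_stat_def e ..
    have Vg: "V_stat Z mu n x = sqrt A" unfolding V_stat_def A_def ..
    have "\<bar>Sigma_stat Z n x - sigma\<bar> \<le> \<bar>V_stat Z mu n x - sigma\<bar> + \<bar>c\<bar>"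
      unfolding Sg Vg by (rule sqrt_diff_bound[OF nn])
    then have "\<bar>V_stat Z mu n x - sigma\<bar> > thr \<or> \<bar>c\<bar> \<ge> u" using x thr by auto
    moreover have "c = (\<Sum>i\<in>I. Z i x) / real (card I) - mu"
      unfolding c_def sample_mean_def cardI I_def by simp
    ultimately show "x \<in> (U \<union> L) \<union> H" using sub1 x unfolding H_def by auto
  qed
  have part2: "prob {x \<in> space M. \<bar>Sigma_stat Z n x - sigma\<bar> > 2 * thr} \<le> 4 * exp (- z\<^sup>2 / 2)"
  proof -
    have "prob {x \<in> space M. \<bar>Sigma_stat Z n x - sigma\<bar> > 2 * thr} \<le> prob ((U \<union> L) \<union> H)"
      by (rule finite_measure_mono[OF sub2]) (use UL_sets H_sets in auto)
    also have "\<dots> \<le> prob (U \<union> L) + prob H" by (rule measure_Un_le[OF UL_sets H_sets])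
    finally show ?thesis using PUL PH by linarith
  qed
  have t2: "2 * z * Delta / sqrt (real n) + 2 * z\<^sup>2 * Delta\<^sup>2 / (12 * real n * sigma) = 2 * thr"
    unfolding thr_def by (simp add: algebra_simps)
  show ?thesis using part1 part2 unfolding t2 thr_def by simp
qed

end
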